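(* Let $(E,B,p,\Gamma)$ be a compact graph bundle, let $F:E\to E$ and $f:B\to B$ be continuous with $p\circ F=f\circ p$, $(B,f)$ minimal, and let $M$ be a minimal set of $F$ with $p(M)=B$. Let $H$ be the homeo-part of $f$, and suppose that $M_z$ is finite for some $z\in H$. Then $N:=\min\{\operatorname{card}M_x: x\in H\}$ is finite and there is a residual set $R\subseteq B$ such that $\operatorname{card}M_b=N$ for every $b\in R$.
   Context: A compact graph bundle $(E,B,p,\Gamma)$: $E,B$ compact metric spaces, $\Gamma$ a graph (nonempty compact metric space that is a union of finitely many arcs pairwise disjoint or meeting only at end-points), $p:E\to B$ a continuous surjection such that each $b\in B$ has an open neighbourhood $U$ and a homeomorphism $h:p^{-1}(U)\to U\times\Gamma$ with $\mathrm{pr}_1\circ h=p$. $M_b=M\cap p^{-1}(b)$. Minimal map: no proper nonempty closed invariant subset; minimal set: nonempty closed invariant set on which the map is minimal. Homeo-part of a continuous selfmap $f$ of a compact metric space $X$: the set $H$ of points $x_0\in X$ whose full orbit $\{x\in X:\exists i,j\ge0,\ f^i(x)=f^j(x_0)\}$ is of the form $\{\dots,x_{-2},x_{-1},x_0,x_1,x_2,\dots\}$ with $f(x_n)=x_{n+1}$ for every integer $n$. Residual: complement of a countable union of nowhere dense sets. *)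

theory Defs
  imports "HOL-Analysis.Analysis"
begin

definition is_graph :: "'g::metric_space set \<Rightarrow> bool" where
  "is_graph \<Gamma> \<longleftrightarrow> \<Gamma> \<noteq> {} \<and> compact \<Gamma> \<and>
     (\<exists>A. finite A \<and> (\<forall>g\<in>A. arc g) \<and> \<Gamma> = \<Union>(path_image ` A) \<and>
        (\<forall>g\<in>A. \<forall>h\<in>A. g \<noteq> h \<longrightarrow>
           path_image g \<inter> path_image h \<subseteq>
             {pathstart g, pathfinish g} \<inter> {pathstart h, pathfinish h}))"

definition compact_graph_bundle ::
  "'e::metric_space set \<Rightarrow> 'b::metric_space set \<Rightarrow> ('e \<Rightarrow> 'b) \<Rightarrow> 'g::metric_space set \<Rightarrow> bool" where
  "compact_graph_bundle E B p \<Gamma> \<longleftrightarrow>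
     compact E \<and> compact B \<and> is_graph \<Gamma> \<and> continuous_on E p \<and> p ` E = B \<and>
     (\<forall>b\<in>B. \<exists>U. openin (top_of_set B) U \<and> b \<in> U \<and>
        (\<exists>h h'. homeomorphism {x\<in>E. p x \<in> U} (U \<times> \<Gamma>) h h' \<and>
                (\<forall>x\<in>{x\<in>E. p x \<in> U}. fst (h x) = p x)))"

definition minimal_set :: "('a::metric_space \<Rightarrow> 'a) \<Rightarrow> 'a set \<Rightarrow> 'a set \<Rightarrow> bool" where
  "minimal_set f X M \<longleftrightarrow> M \<subseteq> X \<and> M \<noteq> {} \<and> closed M \<and> f ` M \<subseteq> M \<and>
     (\<forall>A. A \<subseteq> M \<and> A \<noteq> {} \<and> closed A \<and> f ` A \<subseteq> A \<longrightarrow> A = M)"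

definition full_orbit :: "('a \<Rightarrow> 'a) \<Rightarrow> 'a set \<Rightarrow> 'a \<Rightarrow> 'a set" where
  "full_orbit f X x0 = {x\<in>X. \<exists>i j. (f ^^ i) x = (f ^^ j) x0}"

definition homeo_part :: "('a \<Rightarrow> 'a) \<Rightarrow> 'a set \<Rightarrow> 'a set" where
  "homeo_part f X = {x0\<in>X. \<exists>x::int \<Rightarrow> 'a. x 0 = x0 \<and> (\<forall>n. f (x n) = x (n + 1)) \<and>
                              full_orbit f X x0 = range x}"

definition residual_in :: "'a::topological_space set \<Rightarrow> 'a set \<Rightarrow> bool" where
  "residual_in B R \<longleftrightarrow> (\<exists>\<N>. countable \<N> \<and>
     (\<forall>N\<in>\<N>. N \<subseteq> B \<and> (top_of_set B) interior_of ((top_of_set B) closure_of N) = {}) \<and>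
     R = B - \<Union>\<N>)"

end

theory Submission
  imports Defs
begin
lemma Baire_B:
  fixes B :: "'a::metric_space set"
  assumes "compact B"
  shows "locally_compact_space (top_of_set B) \<and> regular_space (top_of_set B)"
proof -
  have "compactin euclidean B" using assms by (simp add: compactin_euclidean_iff)
  then have "compact_space (top_of_set B)" by (rule compact_space_subtopology)
  then have 1: "locally_compact_space (top_of_set B)" by (rule compact_imp_locally_compact_space)
  have "metrizable_space (top_of_set B)" by (rule metrizable_space_subtopology[OF metrizable_space_euclidean])
  then have 2: "regular_space (top_of_set B)" by (rule metrizable_imp_regular_space)
  show ?thesis using 1 2 by (rule conjI)
qed

lemma funpow_in: "f ` B \<subseteq> B \<Longrightarrow> x \<in> B \<Longrightarrow> (f ^^ k) x \<in> B"
  by (induction k) auto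

lemma funpow_img: "f ` B \<subseteq> B \<Longrightarrow> (f ^^ k) ` B \<subseteq> B"
  using funpow_in[of f B _ k] by (simp add: image_subset_iff)

lemma funpow_cont: "continuous_on B f \<Longrightarrow> f ` B \<subseteq> B \<Longrightarrow> continuous_on B (f ^^ k)"
proof (induction k)
  case 0 then show ?case by (simp add: continuous_on_id)
next
  case (Suc k)
  have "continuous_on B (f \<circ> (f ^^ k))"
    by (rule continuous_on_compose) (use Suc.IH[OF Suc.prems] continuous_on_subset[OF Suc.prems(1) funpow_img[OF Suc.prems(2)]] in auto)
  then show ?case by simp
qed

locale mindyn =
  fixes B :: "'b::metric_space set" and f :: "'b \<Rightarrow> 'b"
  assumes cB: "compact B" and fc: "continuous_on B f" and fm: "f ` B \<subseteq> B"
    and fmin: "minimal_set f B B"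
begin

lemma Bclosed: "closed B" using cB compact_imp_closed by blast
lemma Bne: "B \<noteq> {}" using fmin unfolding minimal_set_def by auto

lemma min_eq: "A \<subseteq> B \<Longrightarrow> A \<noteq> {} \<Longrightarrow> closed A \<Longrightarrow> f ` A \<subseteq> A \<Longrightarrow> A = B"
  using fmin unfolding minimal_set_def by blast

lemma f_onto: "f ` B = B"
proof (rule min_eq)
  show "closed (f ` B)"
    using compact_continuous_image[OF fc cB] compact_imp_closed by blast
  show "f ` B \<subseteq> B" by (rule fm)
  show "f ` B \<noteq> {}" using Bne by simp
  show "f ` (f ` B) \<subseteq> f ` B" using fm by (rule image_mono)
qed

lemma fk_cont: "continuous_on B (f ^^ k)" by (rule funpow_cont[OF fc fm])
lemma fk_in: "x \<in> B \<Longrightarrow> (f ^^ k) x \<in> B" by (rule funpow_in[OF fm])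

lemma back_exists:
  assumes "f ` C = B" "C \<subseteq> B"
  shows "y \<in> B \<Longrightarrow> \<exists>x\<in>B. (f ^^ n) x = y \<and> (\<forall>k<n. (f ^^ k) x \<in> C)"
proof (induction n arbitrary: y)
  case 0 then show ?case by auto
next
  case (Suc n)
  have "y \<in> f ` C" using Suc.prems assms(1) by simp
  then obtain c where c: "c \<in> C" "f c = y" by blast
  have "c \<in> B" using c(1) assms(2) by blast
  from Suc.IH[OF this] obtain x where x: "x \<in> B" "(f ^^ n) x = c" "\<forall>k<n. (f ^^ k) x \<in> C" by blast
  have a1: "(f ^^ Suc n) x = y" using x c by simp
  have a2: "\<forall>k<Suc n. (f ^^ k) x \<in> C"
  proof (intro allI impI)
    fix k assume "k < Suc n"
    then consider "k < n" | "k = n" by linarith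
    then show "(f^^k) x \<in> C" using x c by cases auto
  qed
  show ?case
  proof (rule bexI[of _ x])
    show "(f ^^ Suc n) x = y \<and> (\<forall>k<Suc n. (f ^^ k) x \<in> C)" using a1 a2 by (rule conjI)
    show "x \<in> B" by (rule x(1))
  qed
qed

lemma closed_onto_eq:
  assumes "closed C" "C \<subseteq> B" "f ` C = B"
  shows "C = B"
proof -
  define Z where "Z = {x\<in>B. \<forall>k. (f ^^ k) x \<in> C}"
  have ZI: "Z = B \<inter> (\<Inter>k\<in>UNIV. B \<inter> (f ^^ k) -` C)" unfolding Z_def by blast
  have "B \<inter> (\<Inter>k\<in>UNIV. B \<inter> (f ^^ k) -` C) \<noteq> {}"
  proof (rule compact_imp_fip_image[OF cB])
    show "closed (B \<inter> (f ^^ k) -` C)" for k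
      using continuous_closed_preimage[OF fk_cont Bclosed assms(1)] .
    fix I' :: "nat set" assume I': "finite I'"
    obtain y where y: "y \<in> B" using Bne by auto
    obtain x where x: "x \<in> B" "\<forall>k<Suc (Max (insert 0 I')). (f ^^ k) x \<in> C"
      using back_exists[OF assms(3,2) y] by blast
    have lt: "k < Suc (Max (insert 0 I'))" if "k \<in> I'" for k
      by (rule le_imp_less_Suc, rule Max_ge) (use I' that in auto)
    have "x \<in> B \<inter> (f^^i) -` C" if "i \<in> I'" for i using x(1) x(2)[rule_format, OF lt[OF that]] by blast
    then have "x \<in> B \<inter> (\<Inter>i\<in>I'. B \<inter> (f ^^ i) -` C)" using x(1) by blast
    then show "B \<inter> (\<Inter>i\<in>I'. B \<inter> (f ^^ i) -` C) \<noteq> {}" by blast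
  qed
  then have Zne: "Z \<noteq> {}" using ZI by simp
  have clk: "closed (B \<inter> (f ^^ k) -` C)" for k
    using continuous_closed_preimage[OF fk_cont Bclosed assms(1)] .
  have Zcl: "closed Z" unfolding ZI
    by (intro closed_Int Bclosed closed_INT ballI clk)
  have fZ: "f ` Z \<subseteq> Z"
  proof
    fix y assume "y \<in> f ` Z"
    then obtain x where x: "x \<in> Z" "y = f x" by blast
    have xB: "x \<in> B" and xC: "\<And>k. (f^^k) x \<in> C" using x(1) unfolding Z_def by blast+
    have "f x \<in> B" using fm xB by blast
    moreover have "(f^^k) (f x) \<in> C" for k using xC[of "Suc k"] by (simp add: funpow_swap1)
    ultimately show "y \<in> Z" using x(2) unfolding Z_def by blast
  qed
  have ZB: "Z \<subseteq> B" unfolding Z_def by blast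
  have "Z = B" by (rule min_eq[OF ZB Zne Zcl fZ])
  have "B \<subseteq> C"
  proof
    fix x assume "x \<in> B"
    then have "x \<in> Z" using \<open>Z = B\<close> by simp
    then have "(f ^^ 0) x \<in> C" unfolding Z_def by blast
    then show "x \<in> C" by simp
  qed
  then show ?thesis using assms(2) by (rule subset_antisym[rotated])
qed

lemma FO:
  assumes "openin (top_of_set B) V" "V \<noteq> {}"
  obtains Q where "openin (top_of_set B) Q" "Q \<noteq> {}" "\<And>a. a \<in> B \<Longrightarrow> f a \<in> Q \<Longrightarrow> a \<in> V"
proof -
  have Vs: "V \<subseteq> B" using assms openin_imp_subset by blast
  have cl: "closed (B - V)"
    using assms(1) Bclosed by (metis closedin_closed_eq closedin_diff closedin_self)
  have cpt: "compact (f ` (B - V))"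
  proof (rule compact_continuous_image)
    show "continuous_on (B - V) f" using fc by (rule continuous_on_subset) auto
    have "compact (B \<inter> (B - V))" using cB cl by (rule compact_Int_closed)
    then show "compact (B - V)" by (simp add: Int_absorb1)
  qed
  have ne: "f ` (B - V) \<noteq> B"
  proof
    assume "f ` (B - V) = B"
    then have "B - V = B" using closed_onto_eq[OF cl] by auto
    then show False using Vs assms(2) by auto
  qed
  define Q where "Q = B - f ` (B - V)"
  have "openin (top_of_set B) Q" unfolding Q_def
  proof (rule openin_diff)
    show "openin (top_of_set B) B" by simp
    have "f ` (B - V) \<subseteq> B" using fm by blast
    then show "closedin (top_of_set B) (f ` (B - V))"
      using closed_subset compact_imp_closed[OF cpt] by blast
  qed
  moreover have "Q \<noteq> {}" unfolding Q_def using ne fm by auto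
  moreover have "\<And>a. a \<in> B \<Longrightarrow> f a \<in> Q \<Longrightarrow> a \<in> V" unfolding Q_def by auto
  ultimately show ?thesis by (rule that)
qed


definition nd :: "'b set \<Rightarrow> bool" where
  "nd C \<longleftrightarrow> C \<subseteq> B \<and> closed C \<and> (\<forall>U. openin (top_of_set B) U \<and> U \<subseteq> C \<longrightarrow> U = {})"

lemma openin_sub: "openin (top_of_set B) U \<Longrightarrow> U \<subseteq> B"
  by (rule openin_imp_subset)

lemma nd_preimage:
  assumes "nd C" shows "nd (B \<inter> f -` C)"
  unfolding nd_def
proof (intro conjI allI impI)
  show "B \<inter> f -` C \<subseteq> B" by (rule Int_lower1)
  show "closed (B \<inter> f -` C)"
    using continuous_closed_preimage[OF fc Bclosed] assms unfolding nd_def by blast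
  fix U assume U: "openin (top_of_set B) U \<and> U \<subseteq> B \<inter> f -` C"
  show "U = {}"
  proof (rule ccontr)
    assume "U \<noteq> {}"
    then obtain Q where Q: "openin (top_of_set B) Q" "Q \<noteq> {}" "\<And>a. a \<in> B \<Longrightarrow> f a \<in> Q \<Longrightarrow> a \<in> U"
      using FO U by blast
    have "Q \<subseteq> C"
    proof
      fix q assume q: "q \<in> Q"
      then have "q \<in> f ` B" using openin_sub[OF Q(1)] f_onto by blast
      then obtain a where a: "a \<in> B" "q = f a" by blast
      then have "a \<in> U" using Q(3) q by blast
      then show "q \<in> C" using U a by blast
    qed
    then show False using assms Q unfolding nd_def by blast
  qed
qed

lemma nd_image:
  assumes "nd C" shows "nd (f ` C)"
  unfolding nd_def
proof (intro conjI allI impI)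
  have CB: "C \<subseteq> B" and Ccl: "closed C" using assms unfolding nd_def by blast+
  show "f ` C \<subseteq> B" using CB fm by blast
  have "compact (B \<inter> C)" using cB Ccl by (rule compact_Int_closed)
  then have "compact C" using CB by (simp add: Int_absorb1)
  then have "compact (f ` C)" using continuous_on_subset[OF fc CB] by (intro compact_continuous_image)
  then show "closed (f ` C)" by (rule compact_imp_closed)
  fix U assume U: "openin (top_of_set B) U \<and> U \<subseteq> f ` C"
  show "U = {}"
  proof (rule ccontr)
    assume Une: "U \<noteq> {}"
    obtain T where T: "open T" "U = B \<inter> T" using U by (auto simp: openin_open)
    define W where "W = B \<inter> f -` T"
    have W: "openin (top_of_set B) W" unfolding W_def using continuous_openin_preimage_gen[OF fc T(1)] .
    define V where "V = W - C"
    have V: "openin (top_of_set B) V" unfolding V_def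
      by (rule openin_diff[OF W]) (use CB Ccl closed_subset in blast)
    have "W \<noteq> {}"
    proof -
      obtain u where "u \<in> U" using Une by blast
      then have "u \<in> f ` B" using T f_onto by blast
      then obtain a where "a \<in> B" "f a = u" by blast
      then have "a \<in> W" using \<open>u \<in> U\<close> T unfolding W_def by blast
      then show ?thesis by blast
    qed
    have "V \<noteq> {}"
    proof
      assume "V = {}"
      then have "W \<subseteq> C" unfolding V_def by blast
      then show False using assms W \<open>W \<noteq> {}\<close> unfolding nd_def by blast
    qed
    then obtain Q where Q: "openin (top_of_set B) Q" "Q \<noteq> {}" "\<And>a. a \<in> B \<Longrightarrow> f a \<in> Q \<Longrightarrow> a \<in> V"
      using FO V by blast
    obtain q where q: "q \<in> Q" using Q(2) by blast
    then have "q \<in> f ` B" using openin_sub[OF Q(1)] f_onto by blast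
    then obtain a where a: "a \<in> B" "q = f a" by blast
    then have "a \<in> V" using Q(3) q by blast
    then have "f a \<in> U" unfolding V_def W_def T(2) using a fm by blast
    then obtain c where c: "c \<in> C" "f a = f c" using U by blast
    then have "c \<in> V" using Q(3) q a CB by auto
    then show False using c unfolding V_def by blast
  qed
qed

lemma nd_image_iter: "nd C \<Longrightarrow> nd ((f ^^ i) ` C)"
proof (induction i)
  case 0 then show ?case by simp
next
  case (Suc i)
  have "(f ^^ Suc i) ` C = f ` ((f ^^ i) ` C)" by (simp add: image_comp)
  then show ?case using nd_image[OF Suc.IH[OF Suc.prems]] by simp
qed

lemma nd_preimage_iter: "nd C \<Longrightarrow> nd (B \<inter> (f ^^ j) -` C)"
proof (induction j)
  case 0
  then have "C \<subseteq> B" unfolding nd_def by blast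
  then have "B \<inter> (f ^^ 0) -` C = C" by auto
  then show ?case using 0 by simp
next
  case (Suc j)
  have "B \<inter> (f ^^ Suc j) -` C = B \<inter> f -` (B \<inter> (f ^^ j) -` C)"
  proof (rule set_eqI)
    fix x
    have e: "(f ^^ Suc j) x = (f ^^ j) (f x)" by (simp add: funpow_swap1)
    show "x \<in> B \<inter> (f ^^ Suc j) -` C \<longleftrightarrow> x \<in> B \<inter> f -` (B \<inter> (f ^^ j) -` C)"
      using fm e by auto
  qed
  then show ?case using nd_preimage[OF Suc.IH[OF Suc.prems]] by (simp only:)
qed

definition Pset :: "real \<Rightarrow> 'b set" where
  "Pset \<delta> = (\<lambda>z. f (fst z)) ` {z \<in> B \<times> B. f (fst z) = f (snd z) \<and> \<delta> \<le> dist (fst z) (snd z)}"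

lemma Pset_nd:
  assumes "\<delta> > 0" shows "nd (Pset \<delta>)"
  unfolding nd_def
proof (intro conjI allI impI)
  define T where "T = {z \<in> B \<times> B. f (fst z) = f (snd z) \<and> \<delta> \<le> dist (fst z) (snd z)}"
  have PT: "Pset \<delta> = (\<lambda>z. f (fst z)) ` T" unfolding Pset_def T_def ..
  show "Pset \<delta> \<subseteq> B" unfolding PT T_def using fm by auto
  have c1: "continuous_on (B \<times> B) (\<lambda>z. f (fst z))"
    by (rule continuous_on_compose2[OF fc]) (auto intro: continuous_intros)
  have c2: "continuous_on (B \<times> B) (\<lambda>z. f (snd z))"
    by (rule continuous_on_compose2[OF fc]) (auto intro: continuous_intros)
  have cg: "continuous_on (B \<times> B) (\<lambda>z. (dist (f (fst z)) (f (snd z)), dist (fst z) (snd z)))"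
    by (intro continuous_on_Pair continuous_on_dist c1 c2) (auto intro: continuous_intros simp: Bclosed)
  have cBB: "closed (B \<times> B)" using Bclosed Bclosed by (rule closed_Times)
  have "closed ((B \<times> B) \<inter> (\<lambda>z. (dist (f (fst z)) (f (snd z)), dist (fst z) (snd z))) -` ({0} \<times> {\<delta>..}))"
    by (rule continuous_closed_preimage[OF cg cBB]) (intro closed_Times closed_singleton closed_atLeast)
  moreover have "(B \<times> B) \<inter> (\<lambda>z. (dist (f (fst z)) (f (snd z)), dist (fst z) (snd z))) -` ({0} \<times> {\<delta>..}) = T"
    unfolding T_def by auto
  ultimately have "closed T" by simp
  moreover have "compact (B \<times> B)" using cB cB by (rule compact_Times)
  ultimately have "compact ((B \<times> B) \<inter> T)" by (intro compact_Int_closed)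
  moreover have "(B \<times> B) \<inter> T = T" unfolding T_def by blast
  ultimately have "compact T" by simp
  moreover have "continuous_on T (\<lambda>z. f (fst z))" using c1 by (rule continuous_on_subset) (auto simp: T_def)
  ultimately have "compact (Pset \<delta>)" unfolding PT by (intro compact_continuous_image)
  then show "closed (Pset \<delta>)" by (rule compact_imp_closed)
  fix U assume U: "openin (top_of_set B) U \<and> U \<subseteq> Pset \<delta>"
  show "U = {}"
  proof (rule ccontr)
    assume Une: "U \<noteq> {}"
    obtain u where u: "u \<in> U" using Une by blast
    then have "u \<in> f ` B" using openin_sub[of U] U f_onto by blast
    then obtain a0 where a0: "a0 \<in> B" "f a0 = u" by blast
    obtain T' where T': "open T'" "U = B \<inter> T'" using U by (auto simp: openin_open)
    define V where "V = (B \<inter> f -` T') \<inter> (B \<inter> ball a0 (\<delta>/2))"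
    have o1: "openin (top_of_set B) (B \<inter> f -` T')" by (rule continuous_openin_preimage_gen[OF fc T'(1)])
    have o2: "openin (top_of_set B) (B \<inter> ball a0 (\<delta>/2))" by (rule openin_open_Int) simp
    have V: "openin (top_of_set B) V" unfolding V_def using o1 o2 by (rule openin_Int)
    have "a0 \<in> V" unfolding V_def using a0 u T' assms by auto
    then obtain Q where Q: "openin (top_of_set B) Q" "Q \<noteq> {}" "\<And>a. a \<in> B \<Longrightarrow> f a \<in> Q \<Longrightarrow> a \<in> V"
      using FO V by blast
    obtain q where q: "q \<in> Q" using Q(2) by blast
    then have "q \<in> f ` B" using openin_sub[OF Q(1)] f_onto by blast
    then obtain a where a: "a \<in> B" "q = f a" by blast
    then have "a \<in> V" using Q(3) q by blast
    then have "q \<in> U" unfolding V_def T'(2) using a fm by blast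
    then have "q \<in> Pset \<delta>" using U by blast
    then obtain z where z: "z \<in> T" "q = f (fst z)" unfolding PT by blast
    have z1: "fst z \<in> V" using Q(3) z q unfolding T_def by auto
    have z2: "snd z \<in> V" using Q(3) z q unfolding T_def by auto
    have "dist (fst z) (snd z) < \<delta>"
    proof -
      have "dist a0 (fst z) < \<delta>/2" "dist a0 (snd z) < \<delta>/2" using z1 z2 unfolding V_def by auto
      then show ?thesis using dist_triangle3[of "fst z" "snd z" a0] by linarith
    qed
    then show False using z(1) unfolding T_def by auto
  qed
qed


lemma seq_iter:
  assumes "\<And>n. f (s n) = s (n + 1)"
  shows "s (m + int k) = (f ^^ k) (s m)"
proof (induction k)
  case 0 then show ?case by simp
next
  case (Suc k)
  have "s (m + int (Suc k)) = s ((m + int k) + 1)" by (simp add: ac_simps)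
  also have "\<dots> = f (s (m + int k))" using assms[of "m + int k"] by simp
  also have "\<dots> = (f ^^ Suc k) (s m)" using Suc.IH by simp
  finally show ?case .
qed

lemma periodic_finite:
  assumes q: "q \<in> B" and n: "n \<ge> 1" and per: "(f ^^ n) q = q"
  shows "finite B"
proof -
  define Orb where "Orb = (\<lambda>k. (f ^^ k) q) ` {..<n}"
  have "Orb \<subseteq> B" unfolding Orb_def using fk_in[OF q] by blast
  moreover have "Orb \<noteq> {}"
  proof -
    have "0 \<in> {..<n}" using n by simp
    then show ?thesis unfolding Orb_def by blast
  qed
  moreover have "closed Orb" unfolding Orb_def by (intro finite_imp_closed finite_imageI finite_lessThan)
  moreover have "f ` Orb \<subseteq> Orb"
  proof
    fix y assume "y \<in> f ` Orb"
    then obtain k where k: "k < n" "y = f ((f ^^ k) q)" unfolding Orb_def by blast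
    then have y: "y = (f ^^ Suc k) q" by simp
    show "y \<in> Orb"
    proof (cases "Suc k < n")
      case True then show ?thesis unfolding Orb_def y by blast
    next
      case False
      then have "Suc k = n" using k by simp
      then have "y = (f ^^ 0) q" using y per by simp
      then show ?thesis unfolding Orb_def by (rule image_eqI[of _ _ 0]) (use n in simp)
    qed
  qed
  ultimately have "Orb = B" by (intro min_eq)
  then show ?thesis unfolding Orb_def by (metis finite_imageI finite_lessThan)
qed

lemma H_sub: "homeo_part f B \<subseteq> B"
  unfolding homeo_part_def by blast

lemma H_unique:
  assumes b: "b \<in> homeo_part f B" and a: "a \<in> B" and fab: "f a = f b"
  shows "a = b"
proof -
  have "\<exists>s::int \<Rightarrow> 'b. s 0 = b \<and> (\<forall>n. f (s n) = s (n + 1)) \<and> full_orbit f B b = range s"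
    using b by (simp add: homeo_part_def)
  then obtain s :: "int \<Rightarrow> 'b" where s0: "s 0 = b" and sf': "\<forall>n. f (s n) = s (n + 1)" and sr: "full_orbit f B b = range s"
    by blast
  have sf: "f (s n) = s (n + 1)" for n using sf' by blast
  have bB: "b \<in> B" using b H_sub by blast
  have sB: "s k \<in> B" for k using sr unfolding full_orbit_def by blast
  have "a \<in> full_orbit f B b" unfolding full_orbit_def
  proof (intro CollectI conjI exI)
    show "a \<in> B" by fact
    show "(f ^^ 1) a = (f ^^ 1) b" using fab by simp
  qed
  then obtain m where m: "a = s m" using sr by blast
  show ?thesis
  proof (cases "m = 0")
    case True then show ?thesis using m s0 by simp
  next
    case False
    have eq: "s (m + 1) = s 1" using sf[of m] sf[of 0] fab m s0 by simp
    have "finite B"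
    proof (cases "m > 0")
      case True
      have "s (1 + int (nat m)) = (f ^^ nat m) (s 1)" by (rule seq_iter[where s=s, OF sf])
      then have "(f ^^ nat m) (s 1) = s 1" using eq True by (simp add: add.commute)
      moreover have "nat m \<ge> 1" using True by simp
      ultimately show ?thesis using periodic_finite[OF sB[of 1]] by blast
    next
      case False
      then have mneg: "m < 0" using \<open>m \<noteq> 0\<close> by simp
      have "s ((m + 1) + int (nat (-m))) = (f ^^ nat (-m)) (s (m + 1))" by (rule seq_iter[where s=s, OF sf])
      then have "(f ^^ nat (-m)) (s (m + 1)) = s (m + 1)" using eq mneg by simp
      moreover have "nat (-m) \<ge> 1" using mneg by simp
      ultimately show ?thesis using periodic_finite[OF sB[of "m+1"]] by blast
    qed
    then have "inj_on f B" using f_onto by (intro finite_surj_inj) auto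
    then show ?thesis using a bB fab by (simp add: inj_on_def)
  qed
qed

lemma H_step:
  assumes b: "b \<in> homeo_part f B"
  shows "f b \<in> homeo_part f B"
proof -
  have "\<exists>s::int \<Rightarrow> 'b. s 0 = b \<and> (\<forall>n. f (s n) = s (n + 1)) \<and> full_orbit f B b = range s"
    using b by (simp add: homeo_part_def)
  then obtain s :: "int \<Rightarrow> 'b" where s0: "s 0 = b" and sf': "\<forall>n. f (s n) = s (n + 1)" and sr: "full_orbit f B b = range s"
    by blast
  have sf: "f (s n) = s (n + 1)" for n using sf' by blast
  have bB: "b \<in> B" using b H_sub by blast
  have fo: "full_orbit f B (f b) = full_orbit f B b"
  proof (rule set_eqI)
    fix y
    have e1: "(f ^^ j) (f b) = (f ^^ Suc j) b" for j by (simp add: funpow_swap1)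
    have "(\<exists>i j. (f ^^ i) y = (f ^^ j) (f b)) \<longleftrightarrow> (\<exists>i j. (f ^^ i) y = (f ^^ j) b)"
    proof
      assume "\<exists>i j. (f ^^ i) y = (f ^^ j) (f b)"
      then obtain i j where "(f ^^ i) y = (f ^^ j) (f b)" by blast
      then have "(f ^^ i) y = (f ^^ Suc j) b" using e1 by simp
      then show "\<exists>i j. (f ^^ i) y = (f ^^ j) b" by blast
    next
      assume "\<exists>i j. (f ^^ i) y = (f ^^ j) b"
      then obtain i j where ij: "(f ^^ i) y = (f ^^ j) b" by blast
      have "(f ^^ Suc i) y = f ((f ^^ i) y)" by simp
      also have "\<dots> = (f ^^ Suc j) b" using ij by simp
      also have "\<dots> = (f ^^ j) (f b)" using e1 by simp
      finally show "\<exists>i j. (f ^^ i) y = (f ^^ j) (f b)" by blast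
    qed
    then show "y \<in> full_orbit f B (f b) \<longleftrightarrow> y \<in> full_orbit f B b"
      unfolding full_orbit_def by blast
  qed
  define s' where "s' n = s (n + 1)" for n
  have "s' 0 = f b" unfolding s'_def using sf[of 0] s0 by simp
  moreover have "\<forall>n. f (s' n) = s' (n + 1)" unfolding s'_def using sf by simp
  moreover have "range s' = range s"
  proof
    show "range s' \<subseteq> range s" unfolding s'_def by blast
    show "range s \<subseteq> range s'"
    proof
      fix y assume "y \<in> range s"
      then obtain k where "y = s k" by blast
      then have "y = s' (k - 1)" unfolding s'_def by simp
      then show "y \<in> range s'" by blast
    qed
  qed
  moreover have "f b \<in> B" using fm bB by blast
  ultimately show ?thesis unfolding homeo_part_def using fo sr by blast
qed

lemma H_char:
  assumes xB: "x \<in> B"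
    and uniq: "\<And>y i j a a'. y \<in> B \<Longrightarrow> (f ^^ i) y = (f ^^ j) x \<Longrightarrow> a \<in> B \<Longrightarrow> a' \<in> B
       \<Longrightarrow> f a = y \<Longrightarrow> f a' = y \<Longrightarrow> a = a'"
  shows "x \<in> homeo_part f B"
proof -
  have pre: "\<exists>a. a \<in> B \<and> f a = y" if "y \<in> B" for y
    using that f_onto by (metis imageE)
  define bk where "bk = rec_nat x (\<lambda>_ y. SOME a. a \<in> B \<and> f a = y)"
  have bk0: "bk 0 = x" unfolding bk_def by simp
  have bkS: "bk (Suc n) = (SOME a. a \<in> B \<and> f a = bk n)" for n unfolding bk_def by simp
  have bkB: "bk n \<in> B" for n
  proof (induction n)
    case 0 then show ?case using xB bk0 by simp
  next
    case (Suc n) then show ?case unfolding bkS using someI_ex[OF pre[OF Suc.IH]] by blast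
  qed
  have bkf: "f (bk (Suc n)) = bk n" for n
    unfolding bkS using someI_ex[OF pre[OF bkB[of n]]] by blast
  have bkit: "(f ^^ n) (bk n) = x" for n
  proof (induction n)
    case 0 then show ?case using bk0 by simp
  next
    case (Suc n)
    have "(f ^^ Suc n) (bk (Suc n)) = (f ^^ n) (f (bk (Suc n)))" by (simp add: funpow_swap1)
    then show ?case using Suc bkf by simp
  qed
  define s where "s k = (if 0 \<le> k then (f ^^ nat k) x else bk (nat (-k)))" for k :: int
  have s0: "s 0 = x" unfolding s_def by simp
  have sB: "s k \<in> B" for k unfolding s_def using fk_in[OF xB] bkB by simp
  have sf: "f (s k) = s (k + 1)" for k
  proof (cases "0 \<le> k")
    case True
    then have "nat (k + 1) = Suc (nat k)" by simp
    then show ?thesis unfolding s_def using True by simp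
  next
    case False
    show ?thesis
    proof (cases "k = -1")
      case True
      then show ?thesis unfolding s_def using bkf[of 0] bk0 by simp
    next
      case False
      then have "k + 1 < 0" using \<open>\<not> 0 \<le> k\<close> by simp
      moreover have "nat (-k) = Suc (nat (-(k+1)))" using calculation by simp
      ultimately show ?thesis unfolding s_def using \<open>\<not> 0 \<le> k\<close> bkf by simp
    qed
  qed
  have key: "y \<in> B \<Longrightarrow> (f ^^ i) y = (f ^^ j) x \<Longrightarrow> y = s (int j - int i)" for i j y
  proof (induction i arbitrary: y)
    case 0
    then show ?case unfolding s_def by simp
  next
    case (Suc i)
    have fyB: "f y \<in> B" using Suc.prems fm by blast
    have "(f ^^ i) (f y) = (f ^^ j) x" using Suc.prems by (simp add: funpow_swap1)
    then have fy: "f y = s (int j - int i)" using Suc.IH fyB by blast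
    have e: "f (s (int j - int (Suc i))) = s (int j - int i)" using sf[of "int j - int (Suc i)"] by simp
    have h: "(f ^^ i) (s (int j - int i)) = (f ^^ j) x" using \<open>(f ^^ i) (f y) = (f ^^ j) x\<close> fy by simp
    show ?case using uniq[OF sB h Suc.prems(1) sB fy e] by simp
  qed
  have "full_orbit f B x = range s"
  proof
    show "full_orbit f B x \<subseteq> range s"
    proof
      fix y assume "y \<in> full_orbit f B x"
      then obtain i j where "y \<in> B" "(f ^^ i) y = (f ^^ j) x" unfolding full_orbit_def by blast
      then have "y = s (int j - int i)" by (rule key)
      then show "y \<in> range s" by blast
    qed
    show "range s \<subseteq> full_orbit f B x"
    proof
      fix y assume "y \<in> range s"
      then obtain k where k: "y = s k" by blast
      have "\<exists>i j. (f ^^ i) y = (f ^^ j) x"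
      proof (cases "0 \<le> k")
        case True
        then have "(f ^^ 0) y = (f ^^ nat k) x" unfolding k s_def by simp
        then show ?thesis by blast
      next
        case False
        then have "(f ^^ nat (-k)) y = (f ^^ 0) x" unfolding k s_def using bkit by simp
        then show ?thesis by blast
      qed
      then show "y \<in> full_orbit f B x" unfolding full_orbit_def using sB k by blast
    qed
  qed
  then show ?thesis unfolding homeo_part_def using xB s0 sf by blast
qed


definition Dset :: "nat \<Rightarrow> nat \<Rightarrow> nat \<Rightarrow> 'b set" where
  "Dset n i j = B \<inter> (f ^^ j) -` ((f ^^ i) ` Pset (1 / real (Suc n)))"

lemma D_nd: "nd (Dset n i j)"
  unfolding Dset_def
  by (intro nd_preimage_iter nd_image_iter Pset_nd) simp

lemma notD_H:
  assumes xB: "x \<in> B" and nD: "\<And>n i j. x \<notin> Dset n i j"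
  shows "x \<in> homeo_part f B"
proof (rule H_char[OF xB])
  fix y i j a a'
  assume y: "y \<in> B" and ij: "(f ^^ i) y = (f ^^ j) x" and a: "a \<in> B" and a': "a' \<in> B"
    and fa: "f a = y" and fa': "f a' = y"
  show "a = a'"
  proof (rule ccontr)
    assume "a \<noteq> a'"
    then have "0 < dist a a'" by simp
    then obtain n where n: "inverse (real (Suc n)) < dist a a'" using reals_Archimedean by blast
    have "(a, a') \<in> {z \<in> B \<times> B. f (fst z) = f (snd z) \<and> 1 / real (Suc n) \<le> dist (fst z) (snd z)}"
      using a a' fa fa' n by (simp add: inverse_eq_divide)
    then have "f (fst (a, a')) \<in> Pset (1 / real (Suc n))" unfolding Pset_def by (rule imageI)
    then have "y \<in> Pset (1 / real (Suc n))" using fa by simp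
    then have "(f ^^ j) x \<in> (f ^^ i) ` Pset (1 / real (Suc n))" using ij by (metis imageI)
    then have "x \<in> Dset n i j" unfolding Dset_def using xB by blast
    then show False using nD by blast
  qed
qed

lemma orbit_dense:
  assumes xB: "x \<in> B" and U: "openin (top_of_set B) U" "U \<noteq> {}"
  shows "\<exists>n. (f ^^ n) x \<in> U"
proof -
  define Orb where "Orb = range (\<lambda>n. (f ^^ n) x)"
  have OB: "Orb \<subseteq> B" unfolding Orb_def using fk_in[OF xB] by blast
  have cOB: "closure Orb \<subseteq> B" using OB Bclosed by (rule closure_minimal)
  have "f ` closure Orb \<subseteq> closure Orb"
  proof (rule image_closure_subset)
    show "continuous_on (closure Orb) f" using fc cOB by (rule continuous_on_subset)
    show "closed (closure Orb)" by simp
    have "f ` Orb \<subseteq> Orb"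
    proof
      fix y assume "y \<in> f ` Orb"
      then obtain n where "y = f ((f ^^ n) x)" unfolding Orb_def by blast
      then have "y = (f ^^ Suc n) x" by simp
      then show "y \<in> Orb" unfolding Orb_def by blast
    qed
    then show "f ` Orb \<subseteq> closure Orb" using closure_subset by blast
  qed
  moreover have "closure Orb \<noteq> {}" unfolding Orb_def by simp
  ultimately have "closure Orb = B" using cOB by (intro min_eq) auto
  obtain T where T: "open T" "U = B \<inter> T" using U(1) by (auto simp: openin_open)
  obtain u where "u \<in> U" using U(2) by blast
  then have "u \<in> closure Orb \<inter> T" using T \<open>closure Orb = B\<close> by blast
  then have "T \<inter> closure Orb \<noteq> {}" by blast
  then have "T \<inter> Orb \<noteq> {}" using open_Int_closure_eq_empty[OF T(1)] by blast
  then obtain n where "(f ^^ n) x \<in> T" unfolding Orb_def by blast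
  then have "(f ^^ n) x \<in> U" using T fk_in[OF xB] by blast
  then show ?thesis by blast
qed

end

definition Kset :: "'e::metric_space set \<Rightarrow> ('e \<Rightarrow> 'b) \<Rightarrow> 'b set \<Rightarrow> nat \<Rightarrow> real \<Rightarrow> 'b set" where
  "Kset M p B k \<epsilon> = {b\<in>B. \<exists>g. (\<forall>i<k. g i \<in> M \<and> p (g i) = b) \<and>
      (\<forall>i<k. \<forall>j<k. i \<noteq> j \<longrightarrow> \<epsilon> \<le> dist (g i) (g j))}"

lemma subseq_multi:
  fixes g :: "nat \<Rightarrow> nat \<Rightarrow> 'e::metric_space"
  assumes S: "compact S" and gS: "\<And>m i. i < k \<Longrightarrow> g m i \<in> S"
  shows "\<exists>(r::nat\<Rightarrow>nat) l. strict_mono r \<and> (\<forall>i<k. l i \<in> S \<and> (\<lambda>m. g (r m) i) \<longlonglongrightarrow> l i)"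
  using gS
proof (induction k)
  case 0
  have "strict_mono (\<lambda>x::nat. x)" by (simp add: strict_mono_def)
  then show ?case by (intro exI[of _ "\<lambda>x. x"] exI[of _ "\<lambda>i. undefined"] conjI) auto
next
  case (Suc k)
  have "\<And>m i. i < k \<Longrightarrow> g m i \<in> S" using Suc.prems by simp
  from Suc.IH[OF this] obtain r :: "nat \<Rightarrow> nat" and l where r: "strict_mono r" and l: "\<forall>i<k. l i \<in> S \<and> (\<lambda>m. g (r m) i) \<longlonglongrightarrow> l i"
    by blast
  have gk: "\<And>m. g (r m) k \<in> S" using Suc.prems by simp
  have cd: "\<forall>f. (\<forall>n. f n \<in> S) \<longrightarrow> (\<exists>l\<in>S. \<exists>r::nat\<Rightarrow>nat. strict_mono r \<and> (f \<circ> r) \<longlonglongrightarrow> l)"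
    using S unfolding compact_def .
  have ex: "\<exists>l\<in>S. \<exists>r2::nat\<Rightarrow>nat. strict_mono r2 \<and> ((\<lambda>m. g (r m) k) \<circ> r2) \<longlonglongrightarrow> l"
    by (rule cd[rule_format, OF gk])
  then obtain lk where lk: "lk \<in> S" and ex2: "\<exists>r2::nat\<Rightarrow>nat. strict_mono r2 \<and> ((\<lambda>m. g (r m) k) \<circ> r2) \<longlonglongrightarrow> lk"
    by (rule bexE)
  from ex2 obtain r2 :: "nat \<Rightarrow> nat" where r2: "strict_mono r2" and lim: "((\<lambda>m. g (r m) k) \<circ> r2) \<longlonglongrightarrow> lk"
    by (elim exE conjE)
  define l' where "l' = l(k := lk)"
  have "strict_mono (r \<circ> r2)" using r r2 by (rule strict_mono_o)
  moreover have "\<forall>i<Suc k. l' i \<in> S \<and> (\<lambda>m. g ((r \<circ> r2) m) i) \<longlonglongrightarrow> l' i"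
  proof (intro allI impI)
    fix i assume "i < Suc k"
    then consider "i < k" | "i = k" by linarith
    then show "l' i \<in> S \<and> (\<lambda>m. g ((r \<circ> r2) m) i) \<longlonglongrightarrow> l' i"
    proof cases
      case 1
      then have "(\<lambda>m. g (r m) i) \<longlonglongrightarrow> l i" using l by blast
      then have "((\<lambda>m. g (r m) i) \<circ> r2) \<longlonglongrightarrow> l i" using r2 by (rule LIMSEQ_subseq_LIMSEQ)
      then show ?thesis using 1 l unfolding l'_def by (simp add: comp_def)
    next
      case 2
      then show ?thesis using lk lim unfolding l'_def by (simp add: comp_def)
    qed
  qed
  ultimately show ?case by (intro exI[of _ "r \<circ> r2"] exI[of _ l'] conjI)
qed

lemma K_closed:
  fixes M :: "'e::metric_space set" and B :: "'b::metric_space set"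
  assumes M: "compact M" and p: "continuous_on M p" and B: "closed B"
  shows "closed (Kset M p B k \<epsilon>)"
  unfolding closed_sequential_limits
proof (intro allI impI, elim conjE)
  fix x :: "nat \<Rightarrow> 'b" and b assume xK: "\<forall>n. x n \<in> Kset M p B k \<epsilon>" and xb: "x \<longlonglongrightarrow> b"
  have "\<forall>n. \<exists>g. (\<forall>i<k. g i \<in> M \<and> p (g i) = x n) \<and> (\<forall>i<k. \<forall>j<k. i \<noteq> j \<longrightarrow> \<epsilon> \<le> dist (g i) (g j))"
    using xK unfolding Kset_def by blast
  from choice[OF this] obtain G where G: "\<forall>n. (\<forall>i<k. G n i \<in> M \<and> p (G n i) = x n) \<and> (\<forall>i<k. \<forall>j<k. i \<noteq> j \<longrightarrow> \<epsilon> \<le> dist (G n i) (G n j))"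
    by blast
  have GM: "\<And>m i. i < k \<Longrightarrow> G m i \<in> M" using G by blast
  have Gp: "\<And>m i. i < k \<Longrightarrow> p (G m i) = x m" using G by blast
  have Gd: "\<And>m i j. i < k \<Longrightarrow> j < k \<Longrightarrow> i \<noteq> j \<Longrightarrow> \<epsilon> \<le> dist (G m i) (G m j)" using G by blast
  from subseq_multi[where S=M and k=k and g=G, OF M GM] obtain r :: "nat \<Rightarrow> nat" and l where r: "strict_mono r" and l: "\<forall>i<k. l i \<in> M \<and> (\<lambda>m. G (r m) i) \<longlonglongrightarrow> l i"
    by blast
  have xB: "\<And>n. x n \<in> B" using xK unfolding Kset_def by blast
  have bB: "b \<in> B" by (rule closed_sequentially[OF B xB xb])
  have xr: "(\<lambda>m. x (r m)) \<longlonglongrightarrow> b" using LIMSEQ_subseq_LIMSEQ[OF xb r] by (simp add: comp_def)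
  have pl: "p (l i) = b" if i: "i < k" for i
  proof -
    have li: "l i \<in> M" and lt: "(\<lambda>m. G (r m) i) \<longlonglongrightarrow> l i" using l i by auto
    have "(\<lambda>m. p (G (r m) i)) \<longlonglongrightarrow> p (l i)"
      by (rule continuous_on_tendsto_compose[OF p lt li]) (simp add: GM[OF i])
    moreover have "(\<lambda>m. p (G (r m) i)) = (\<lambda>m. x (r m))" using Gp[OF i] by simp
    ultimately have "(\<lambda>m. x (r m)) \<longlonglongrightarrow> p (l i)" by simp
    from LIMSEQ_unique[OF this xr] show ?thesis .
  qed
  have dl: "\<epsilon> \<le> dist (l i) (l j)" if "i < k" "j < k" "i \<noteq> j" for i j
  proof -
    have "(\<lambda>m. G (r m) i) \<longlonglongrightarrow> l i" "(\<lambda>m. G (r m) j) \<longlonglongrightarrow> l j" using l that by auto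
    then have "(\<lambda>m. dist (G (r m) i) (G (r m) j)) \<longlonglongrightarrow> dist (l i) (l j)"
      by (rule tendsto_dist)
    moreover have "\<exists>N. \<forall>m\<ge>N. \<epsilon> \<le> dist (G (r m) i) (G (r m) j)" using Gd[OF that] by blast
    ultimately show ?thesis by (rule LIMSEQ_le_const)
  qed
  have lM: "\<forall>i<k. l i \<in> M \<and> p (l i) = b" using l pl by blast
  have ld: "\<forall>i<k. \<forall>j<k. i \<noteq> j \<longrightarrow> \<epsilon> \<le> dist (l i) (l j)" using dl by blast
  show "b \<in> Kset M p B k \<epsilon>" unfolding Kset_def
    by (rule CollectI, rule conjI[OF bB], rule exI[of _ l], rule conjI[OF lM ld])
qed

lemma K_card:
  assumes bK: "b \<in> Kset M p B k \<epsilon>" and e: "\<epsilon> > 0" and fin: "finite {y\<in>M. p y = b}"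
  shows "k \<le> card {y\<in>M. p y = b}"
proof -
  obtain g where g1: "\<forall>i<k. g i \<in> M \<and> p (g i) = b" and g2: "\<forall>i<k. \<forall>j<k. i \<noteq> j \<longrightarrow> \<epsilon> \<le> dist (g i) (g j)"
    using bK unfolding Kset_def by blast
  have inj: "inj_on g {..<k}"
  proof (rule inj_onI)
    fix i j assume "i \<in> {..<k}" "j \<in> {..<k}" "g i = g j"
    then show "i = j" using g2 e by (metis dist_self lessThan_iff linorder_not_le)
  qed
  have sub: "g ` {..<k} \<subseteq> {y\<in>M. p y = b}" using g1 by blast
  have "k = card (g ` {..<k})" using card_image[OF inj] by simp
  also have "\<dots> \<le> card {y\<in>M. p y = b}" using card_mono[OF fin sub] .
  finally show ?thesis .
qed

lemma K_big:
  assumes bB: "b \<in> B" and big: "\<not> (finite {y\<in>M. p y = b} \<and> card {y\<in>M. p y = b} < k)"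
  shows "\<exists>m. b \<in> Kset M p B k (1 / real (Suc m))"
proof -
  define A where "A = {y\<in>M. p y = b}"
  obtain S where S: "S \<subseteq> A" "finite S" "card S = k"
  proof (cases "finite A")
    case True
    then have "k \<le> card A" using big unfolding A_def by simp
    then show ?thesis using that by (metis obtain_subset_with_card_n)
  next
    case False
    then show ?thesis using that infinite_arbitrarily_large by metis
  qed
  obtain g where g: "bij_betw g {0..<k} S" using ex_bij_betw_nat_finite[OF S(2)] S(3) by blast
  have gA: "g i \<in> M \<and> p (g i) = b" if "i < k" for i
  proof -
    have "g i \<in> S" using g that unfolding bij_betw_def by auto
    then show ?thesis using S(1) unfolding A_def by blast
  qed
  define D where "D = (\<lambda>(i,j). dist (g i) (g j)) ` {(i,j). i < k \<and> j < k \<and> i \<noteq> j}"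
  have finD: "finite D" unfolding D_def
    by (rule finite_imageI) (rule finite_subset[of _ "{..<k} \<times> {..<k}"], auto)
  have Dpos: "d > 0" if "d \<in> D" for d
  proof -
    from that obtain z where z: "z \<in> {(i,j). i < k \<and> j < k \<and> i \<noteq> j}" "d = (\<lambda>(i,j). dist (g i) (g j)) z"
      unfolding D_def by blast
    obtain i j where zij: "z = (i, j)" by fastforce
    have ij: "i < k" "j < k" "i \<noteq> j" "d = dist (g i) (g j)" using z unfolding zij by auto
    have "g i \<noteq> g j" using g ij unfolding bij_betw_def inj_on_def by auto
    then show ?thesis using ij by simp
  qed
  define \<delta> where "\<delta> = Min (insert 1 D)"
  have dpos: "\<delta> > 0" unfolding \<delta>_def using finD Dpos by (subst Min_gr_iff) auto
  obtain m where m: "inverse (real (Suc m)) < \<delta>" using reals_Archimedean[OF dpos] by blast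
  have "1 / real (Suc m) \<le> dist (g i) (g j)" if "i < k" "j < k" "i \<noteq> j" for i j
  proof -
    have "dist (g i) (g j) \<in> D" unfolding D_def using that by force
    then have "\<delta> \<le> dist (g i) (g j)" unfolding \<delta>_def using finD by simp
    then show ?thesis using m by (simp add: inverse_eq_divide)
  qed
  then show ?thesis unfolding Kset_def using bB gA by blast
qed

lemma nd_residual_piece:
  fixes B :: "'b::metric_space set"
  assumes "C \<subseteq> B" "closed C" "\<And>U. openin (top_of_set B) U \<Longrightarrow> U \<subseteq> C \<Longrightarrow> U = {}"
  shows "C \<subseteq> B \<and> (top_of_set B) interior_of ((top_of_set B) closure_of C) = {}"
proof -
  have "closedin (top_of_set B) C" using assms(1,2) by (rule closed_subset)
  then have "(top_of_set B) closure_of C = C" by (rule closure_of_closedin)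
  then show ?thesis using assms by (simp add: interior_of_eq_empty)
qed

theorem proposition3:
  fixes E :: "'e::metric_space set" and B :: "'b::metric_space set"
    and \<Gamma> :: "'g::metric_space set"
    and p :: "'e \<Rightarrow> 'b" and F :: "'e \<Rightarrow> 'e" and f :: "'b \<Rightarrow> 'b" and M :: "'e set"
    and z :: 'b
  assumes gb: "compact_graph_bundle E B p \<Gamma>"
    and F_cont: "continuous_on E F" and F_maps: "F ` E \<subseteq> E"
    and f_cont: "continuous_on B f" and f_maps: "f ` B \<subseteq> B"
    and semiconj: "\<forall>x\<in>E. p (F x) = f (p x)"
    and f_minimal: "minimal_set f B B"
    and M_minimal: "minimal_set F E M"
    and M_onto: "p ` M = B"
    and z_H: "z \<in> homeo_part f B"
    and z_fin: "finite {x\<in>M. p x = z}"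
  shows "\<exists>N::nat.
           (\<exists>x\<in>homeo_part f B. finite {y\<in>M. p y = x} \<and> card {y\<in>M. p y = x} = N) \<and>
           (\<forall>x\<in>homeo_part f B. finite {y\<in>M. p y = x} \<longrightarrow> N \<le> card {y\<in>M. p y = x}) \<and>
           (\<exists>R. residual_in B R \<and>
                (\<forall>b\<in>R. finite {y\<in>M. p y = b} \<and> card {y\<in>M. p y = b} = N))"
proof -
  have cE: "compact E" and cB: "compact B" and pc: "continuous_on E p" and pE: "p ` E = B"
    using gb unfolding compact_graph_bundle_def by auto
  interpret mindyn B f using cB f_cont f_maps f_minimal by unfold_locales
  define H where "H = homeo_part f B"
  have ME: "M \<subseteq> E" and Mne: "M \<noteq> {}" and Mcl: "closed M" and FM: "F ` M \<subseteq> M"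
    using M_minimal unfolding minimal_set_def by auto
  have Mmin: "\<And>A. A \<subseteq> M \<Longrightarrow> A \<noteq> {} \<Longrightarrow> closed A \<Longrightarrow> F ` A \<subseteq> A \<Longrightarrow> A = M"
    using M_minimal unfolding minimal_set_def by blast
  have "compact (E \<inter> M)" using cE Mcl by (rule compact_Int_closed)
  then have cM: "compact M" using ME by (simp add: Int_absorb1)
  have pM: "continuous_on M p" using pc ME by (rule continuous_on_subset)
  have FMc: "continuous_on M F" using F_cont ME by (rule continuous_on_subset)
  have FMeq: "F ` M = M"
  proof (rule Mmin)
    show "F ` M \<subseteq> M" by (rule FM)
    show "F ` M \<noteq> {}" using Mne by simp
    show "closed (F ` M)" using compact_continuous_image[OF FMc cM] by (rule compact_imp_closed)
    show "F ` (F ` M) \<subseteq> F ` M" using FM by (rule image_mono)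
  qed
  define Fib where "Fib b = {y\<in>M. p y = b}" for b
  have fib_step: "Fib (f b) \<subseteq> F ` Fib b" if bH: "b \<in> H" for b
  proof
    fix y assume "y \<in> Fib (f b)"
    then have yM: "y \<in> M" and py: "p y = f b" unfolding Fib_def by auto
    then have "y \<in> F ` M" using FMeq by simp
    then obtain w where w: "w \<in> M" "y = F w" by blast
    have wE: "w \<in> E" using w ME by blast
    have "p (F w) = f (p w)" using semiconj wE by blast
    then have "f (p w) = f b" using py w by simp
    moreover have "p w \<in> B" using pE wE by blast
    ultimately have "p w = b" using H_unique bH unfolding H_def by blast
    then show "y \<in> F ` Fib b" using w unfolding Fib_def by blast
  qed
  have card_step: "finite (Fib (f b)) \<and> card (Fib (f b)) \<le> card (Fib b)"
    if bH: "b \<in> H" and fin: "finite (Fib b)" for b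
  proof -
    have "finite (F ` Fib b)" using fin by (rule finite_imageI)
    then have f1: "finite (Fib (f b))" using fib_step[OF bH] by (rule finite_subset[rotated])
    have "card (Fib (f b)) \<le> card (F ` Fib b)" using fib_step[OF bH] \<open>finite (F ` Fib b)\<close> by (rule card_mono[rotated])
    also have "\<dots> \<le> card (Fib b)" by (rule card_image_le[OF fin])
    finally show ?thesis using f1 by blast
  qed
  define NS where "NS = {n. \<exists>x\<in>H. finite (Fib x) \<and> card (Fib x) = n}"
  define N where "N = (LEAST n. n \<in> NS)"
  have "card (Fib z) \<in> NS" unfolding NS_def H_def using z_H z_fin unfolding Fib_def by blast
  then have "N \<in> NS" unfolding N_def by (rule LeastI)
  then obtain xs where xsH: "xs \<in> H" and xsfin: "finite (Fib xs)" and xsc: "card (Fib xs) = N"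
    unfolding NS_def by blast
  have Hmin: "N \<le> card (Fib x)" if "x \<in> H" "finite (Fib x)" for x
  proof -
    have "card (Fib x) \<in> NS" unfolding NS_def using that by blast
    then show ?thesis unfolding N_def by (rule Least_le)
  qed
  have xsB: "xs \<in> B" using xsH H_sub unfolding H_def by blast
  have orb: "(f ^^ n) xs \<in> H \<and> finite (Fib ((f ^^ n) xs)) \<and> card (Fib ((f ^^ n) xs)) = N" for n
  proof (induction n)
    case 0 then show ?case using xsH xsfin xsc by simp
  next
    case (Suc n)
    let ?b = "(f ^^ n) xs"
    have bH: "?b \<in> H" and bf: "finite (Fib ?b)" and bc: "card (Fib ?b) = N" using Suc by blast+
    have H1: "f ?b \<in> H" using H_step bH unfolding H_def by blast
    have cs: "finite (Fib (f ?b)) \<and> card (Fib (f ?b)) \<le> card (Fib ?b)" by (rule card_step[OF bH bf])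
    then have "N \<le> card (Fib (f ?b))" using Hmin[OF H1] by blast
    then have "card (Fib (f ?b)) = N" using cs bc by linarith
    then show ?case using H1 cs by simp
  qed
  define U where "U m = Kset M p B (Suc N) (1 / real (Suc m))" for m
  have U_nd: "U m \<subseteq> B \<and> (top_of_set B) interior_of ((top_of_set B) closure_of (U m)) = {}" for m
  proof (rule nd_residual_piece)
    show "U m \<subseteq> B" unfolding U_def Kset_def by blast
    show "closed (U m)" unfolding U_def by (rule K_closed[OF cM pM Bclosed])
    fix W assume W: "openin (top_of_set B) W" "W \<subseteq> U m"
    show "W = {}"
    proof (rule ccontr)
      assume "W \<noteq> {}"
      then obtain n where n: "(f ^^ n) xs \<in> W" using orbit_dense[OF xsB W(1)] by blast
      then have "(f ^^ n) xs \<in> U m" using W(2) by blast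
      then have "Suc N \<le> card (Fib ((f ^^ n) xs))" unfolding U_def Fib_def
        by (rule K_card) (use orb[of n] in \<open>auto simp: Fib_def\<close>)
      then show False using orb[of n] by simp
    qed
  qed
  define G where "G = {b\<in>B. finite (Fib b) \<and> card (Fib b) < N}"
  have GB: "G \<subseteq> B" unfolding G_def by blast
  have cGB: "closure G \<subseteq> B" using GB Bclosed by (rule closure_minimal)
  have G_nd: "closure G \<subseteq> B \<and> (top_of_set B) interior_of ((top_of_set B) closure_of (closure G)) = {}"
  proof (rule nd_residual_piece)
    show "closure G \<subseteq> B" by (rule cGB)
    show "closed (closure G)" by simp
    fix V assume V: "openin (top_of_set B) V" "V \<subseteq> closure G"
    show "V = {}"
    proof (rule ccontr)
      assume Vne: "V \<noteq> {}"
      obtain T' where T': "open T'" "V = B \<inter> T'" using V(1) by (auto simp: openin_open)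
      define \<G> where "\<G> = range (\<lambda>m. Kset M p B N (1 / real (Suc m)) \<inter> closure V) \<union> range (\<lambda>(n,i,j). Dset n i j)"
      have "countable \<G>" unfolding \<G>_def by simp
      moreover have "closedin (top_of_set B) T \<and> (top_of_set B) interior_of T = {}" if "T \<in> \<G>" for T
      proof -
        have "(\<exists>m. T = Kset M p B N (1 / real (Suc m)) \<inter> closure V) \<or> (\<exists>n i j. T = Dset n i j)"
          using that unfolding \<G>_def by auto
        then show ?thesis
        proof
          assume "\<exists>m. T = Kset M p B N (1 / real (Suc m)) \<inter> closure V"
          then obtain m where Tm: "T = Kset M p B N (1 / real (Suc m)) \<inter> closure V" by blast
          have TB: "T \<subseteq> B" unfolding Tm Kset_def by blast
          have Tcl: "closed T" unfolding Tm by (intro closed_Int K_closed[OF cM pM Bclosed] closed_closure)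
          have "closedin (top_of_set B) T" using TB Tcl by (rule closed_subset)
          moreover have "(top_of_set B) interior_of T = {}"
            unfolding interior_of_eq_empty
          proof (intro allI impI, elim conjE)
            fix W assume W: "openin (top_of_set B) W" "W \<subseteq> T"
            show "W = {}"
            proof (rule ccontr)
              assume "W \<noteq> {}"
              then obtain w where w: "w \<in> W" by blast
              obtain T where T: "open T" "W = B \<inter> T" using W(1) by (auto simp: openin_open)
              have "w \<in> closure V" using w W(2) unfolding Tm by blast
              then have "T \<inter> closure V \<noteq> {}" using w T by blast
              then have "T \<inter> V \<noteq> {}" using open_Int_closure_eq_empty[OF T(1)] by blast
              then obtain v where v: "v \<in> T" "v \<in> V" by blast
              have "v \<in> closure G" using v V(2) by blast
              then have "(T \<inter> T') \<inter> closure G \<noteq> {}" using v T' by blast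
              moreover have "open (T \<inter> T')" using T(1) T'(1) by (rule open_Int)
              ultimately have "(T \<inter> T') \<inter> G \<noteq> {}" using open_Int_closure_eq_empty by blast
              then obtain g where g: "g \<in> T" "g \<in> G" by blast
              have "g \<in> W" using g GB T(2) by blast
              then have "g \<in> Kset M p B N (1 / real (Suc m))" using W(2) unfolding Tm by blast
              moreover have gf: "finite (Fib g)" "card (Fib g) < N" using g(2) unfolding G_def by auto
              ultimately have "N \<le> card (Fib g)" unfolding Fib_def by (intro K_card) auto
              then show False using gf by simp
            qed
          qed
          ultimately show ?thesis by blast
        next
          assume "\<exists>n i j. T = Dset n i j"
          then obtain n i j where Tn: "T = Dset n i j" by blast
          have "nd T" unfolding Tn by (rule D_nd)
          then have TB: "T \<subseteq> B" and Tcl: "closed T" and Ti: "\<forall>U. openin (top_of_set B) U \<and> U \<subseteq> T \<longrightarrow> U = {}"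
            unfolding nd_def by blast+
          have "closedin (top_of_set B) T" using TB Tcl by (rule closed_subset)
          moreover have "(top_of_set B) interior_of T = {}" unfolding interior_of_eq_empty using Ti by blast
          ultimately show ?thesis by blast
        qed
      qed
      ultimately have "(top_of_set B) interior_of \<Union>\<G> = {}"
        using Baire_B[OF cB] by (intro Baire_category_alt) auto
      then have "\<not> V \<subseteq> \<Union>\<G>" using V(1) Vne unfolding interior_of_eq_empty by blast
      then obtain b where bV: "b \<in> V" and bG: "b \<notin> \<Union>\<G>" by blast
      have bB: "b \<in> B" using bV openin_sub[OF V(1)] by blast
      have "b \<notin> Dset n i j" for n i j
      proof
        assume "b \<in> Dset n i j"
        moreover have "Dset n i j \<in> \<G>" unfolding \<G>_def by (rule UnI2, rule image_eqI[of _ _ "(n,i,j)"]) simp_all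
        ultimately show False using bG by blast
      qed
      then have bH: "b \<in> H" unfolding H_def using notD_H[OF bB] by blast
      have "finite (Fib b) \<and> card (Fib b) < N"
      proof (rule ccontr)
        assume "\<not> (finite (Fib b) \<and> card (Fib b) < N)"
        then obtain m where "b \<in> Kset M p B N (1 / real (Suc m))"
          using K_big[OF bB] unfolding Fib_def by blast
        moreover have "b \<in> closure V" using bV closure_subset by blast
        ultimately have "b \<in> Kset M p B N (1 / real (Suc m)) \<inter> closure V" by blast
        moreover have "Kset M p B N (1 / real (Suc m)) \<inter> closure V \<in> \<G>" unfolding \<G>_def by blast
        ultimately show False using bG by blast
      qed
      then show False using Hmin[OF bH] by simp
    qed
  qed
  define \<N> where "\<N> = range U \<union> {closure G}"
  define R where "R = B - \<Union>\<N>"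
  have "residual_in B R" unfolding residual_in_def
  proof (intro exI conjI)
    show "countable \<N>" unfolding \<N>_def by simp
    show "\<forall>C\<in>\<N>. C \<subseteq> B \<and> (top_of_set B) interior_of ((top_of_set B) closure_of C) = {}"
      unfolding \<N>_def using U_nd G_nd by blast
    show "R = B - \<Union>\<N>" by (rule R_def)
  qed
  moreover have "finite (Fib b) \<and> card (Fib b) = N" if bR: "b \<in> R" for b
  proof -
    have bB: "b \<in> B" using bR unfolding R_def by blast
    have "b \<notin> closure G" using bR unfolding R_def \<N>_def by blast
    then have "b \<notin> G" using closure_subset by blast
    then have n1: "\<not> (finite (Fib b) \<and> card (Fib b) < N)" unfolding G_def using bB by blast
    have n2: "finite (Fib b) \<and> card (Fib b) < Suc N"
    proof (rule ccontr)
      assume "\<not> (finite (Fib b) \<and> card (Fib b) < Suc N)"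
      then obtain m where "b \<in> Kset M p B (Suc N) (1 / real (Suc m))"
        using K_big[OF bB] unfolding Fib_def by blast
      then have "b \<in> U m" unfolding U_def .
      then show False using bR unfolding R_def \<N>_def by blast
    qed
    show ?thesis using n1 n2 by auto
  qed
  ultimately show ?thesis
    using xsH xsfin xsc Hmin unfolding H_def Fib_def by blast
qed

end
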